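(* In the Ornstein–Uhlenbeck setting described in the context, regard the optimal intervention boundaries as functions $a^*(\theta)$, $b^*(\theta)$ of the reference target $\theta$, all other parameters $(r,\rho,m,\sigma,c_1,c_2)$ being fixed. Then $\theta\mapsto a^*(\theta)$ and $\theta\mapsto b^*(\theta)$ are both increasing.
   Context: Fix parameters $r>0$, $\rho>0$, $m\in\mathbb{R}$, $\sigma>0$, a reference target $\theta$ (the logarithm of the central parity) and constants $c_1,c_2\in\mathbb{R}$ with $c_1+c_2>0$. The (log-)exchange rate controlled by $\nu=\xi-\eta$ (difference of two nondecreasing adapted left-continuous processes started at $0$, with increments on disjoint sets) evolves as $dX_t=\rho(m-X_t)dt+\sigma dB_t+d\xi_t-d\eta_t$, $X_0=x\in\mathbb{R}$, where $B$ is a Brownian motion. The central bank minimizes over admissible controls $\mathbb{E}_x[\int_0^\infty e^{-rs}\tfrac12(X_s-\theta)^2ds+c_1\int_0^\infty e^{-rs}d\xi_s+c_2\int_0^\infty e^{-rs}d\eta_s]$ (jumps included). Let $D_\alpha(y)=\frac{e^{-y^2/4}}{\Gamma(-\alpha)}\int_0^\infty t^{-\alpha-1}e^{-t^2/2-yt}dt$ ($\alpha<0$), $\widehat\phi(x)=e^{\rho(x-m)^2/(2\sigma^2)}D_{-(r+\rho)/\rho}\big(\tfrac{(x-m)\sqrt{2\rho}}{\sigma}\big)$, $\widehat\psi(x)=e^{\rho(x-m)^2/(2\sigma^2)}D_{-(r+\rho)/\rho}\big(-\tfrac{(x-m)\sqrt{2\rho}}{\sigma}\big)$, $\widehat m'(z)=\frac{2}{\sigma^2}e^{-\rho(z-m)^2/\sigma^2}$.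 The optimal intervention boundaries $a^*<b^*$ are the unique pair with $a^*<\theta-(r+\rho)c_1$ and $b^*>\theta+(r+\rho)c_2$ solving $\int_a^b(z-\theta+(r+\rho)c_1)\widehat m'\widehat\phi\,dz=-(r+\rho)(c_1+c_2)\int_b^\infty\widehat m'\widehat\phi\,dz$ and $\int_a^b(z-\theta-(r+\rho)c_2)\widehat m'\widehat\psi\,dz=(r+\rho)(c_1+c_2)\int_{-\infty}^a\widehat m'\widehat\psi\,dz$; the optimal policy keeps $X$ in $[a^*,b^*]$ by minimal reflection. *)

theory Defs
  imports "HOL-Analysis.Analysis"
begin

text \<open>Parabolic cylinder function D_alpha (alpha < 0), via its integral representation.\<close>
definition parcyl :: "real \<Rightarrow> real \<Rightarrow> real" where
  "parcyl \<alpha> y = exp (- (y^2) / 4) / Gamma (- \<alpha>) *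
     (LBINT t:{0<..}. t powr (- \<alpha> - 1) * exp (- (t^2) / 2 - y * t))"

definition phi_hat :: "real \<Rightarrow> real \<Rightarrow> real \<Rightarrow> real \<Rightarrow> real \<Rightarrow> real" where
  "phi_hat r \<rho> m \<sigma> x = exp (\<rho> * (x - m)^2 / (2 * \<sigma>^2)) *
     parcyl (- (r + \<rho>) / \<rho>) ((x - m) * sqrt (2 * \<rho>) / \<sigma>)"

definition psi_hat :: "real \<Rightarrow> real \<Rightarrow> real \<Rightarrow> real \<Rightarrow> real \<Rightarrow> real" where
  "psi_hat r \<rho> m \<sigma> x = exp (\<rho> * (x - m)^2 / (2 * \<sigma>^2)) *
     parcyl (- (r + \<rho>) / \<rho>) (- ((x - m) * sqrt (2 * \<rho>) / \<sigma>))"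

definition speed_dens :: "real \<Rightarrow> real \<Rightarrow> real \<Rightarrow> real \<Rightarrow> real" where
  "speed_dens \<rho> m \<sigma> z = 2 / \<sigma>^2 * exp (- \<rho> * (z - m)^2 / \<sigma>^2)"

definition opt_boundaries ::
  "real \<Rightarrow> real \<Rightarrow> real \<Rightarrow> real \<Rightarrow> real \<Rightarrow> real \<Rightarrow> real \<Rightarrow> real \<Rightarrow> real \<Rightarrow> bool" where
  "opt_boundaries r \<rho> m \<sigma> c1 c2 \<theta> a b \<longleftrightarrow>
     a < b \<and> a < \<theta> - (r + \<rho>) * c1 \<and> b > \<theta> + (r + \<rho>) * c2 \<and>
     (LBINT z:{a..b}. (z - \<theta> + (r + \<rho>) * c1) * speed_dens \<rho> m \<sigma> z * phi_hat r \<rho> m \<sigma> z)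
       = - (r + \<rho>) * (c1 + c2) * (LBINT z:{b..}. speed_dens \<rho> m \<sigma> z * phi_hat r \<rho> m \<sigma> z) \<and>
     (LBINT z:{a..b}. (z - \<theta> - (r + \<rho>) * c2) * speed_dens \<rho> m \<sigma> z * psi_hat r \<rho> m \<sigma> z)
       = (r + \<rho>) * (c1 + c2) * (LBINT z:{..a}. speed_dens \<rho> m \<sigma> z * psi_hat r \<rho> m \<sigma> z)"

end

theory Submission
  imports Defs "HOL-Probability.Probability"
begin

lemma gauss_integrable:
  fixes A c :: real assumes "A > 0"
  shows "integrable lborel (\<lambda>x. exp (- A * (x - c)^2))"
proof -
  define s where "s = 1 / sqrt (2 * A)"
  have s: "s > 0" using assms by (simp add: s_def)
  have s2: "2 * s^2 = 1 / A" using assms by (simp add: s_def power_divide)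
  have "integrable lborel (\<lambda>x. sqrt (2 * pi * s\<^sup>2) * normal_density c s x)"
    using integrable_normal_density[OF s] by simp
  moreover have "(\<lambda>x. sqrt (2 * pi * s\<^sup>2) * normal_density c s x) = (\<lambda>x. exp (- A * (x - c)^2))"
    using s s2 assms by (auto simp: normal_density_def fun_eq_iff field_simps)
  ultimately show ?thesis by simp
qed

lemma set_integral_pos:
  fixes f :: "real \<Rightarrow> real"
  assumes "set_integrable lborel S f" "S \<in> sets lborel" "\<And>x. x \<in> S \<Longrightarrow> f x > 0"
    "emeasure lborel S > 0"
  shows "(LBINT x:S. f x) > 0"
proof -
  have int: "integrable lborel (\<lambda>x. indicator S x * f x)"
    using assms(1) by (simp add: set_integrable_def)
  have nn: "AE x in lborel. 0 \<le> indicator S x * f x"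
    using assms(3) by (auto simp: indicator_def less_imp_le)
  have ge: "(LBINT x:S. f x) \<ge> 0"
    unfolding set_lebesgue_integral_def using nn
    by (simp add: integral_nonneg_AE)
  { assume "(LBINT x:S. f x) = 0"
    then have "AE x in lborel. indicator S x * f x = 0"
      using integral_nonneg_eq_0_iff_AE[OF int nn] by (simp add: set_lebesgue_integral_def)
    then have "AE x in lborel. x \<notin> S"
      by eventually_elim (metis assms(3) indicator_simps(1) mult_1 less_irrefl)
    then have "emeasure lborel S = 0"
      using AE_iff_measurable[OF assms(2), of "\<lambda>x. x \<notin> S"] by simp
    with assms(4) have False by simp }
  with ge show ?thesis by (metis less_eq_real_def)
qed

lemma kernel_integrable:
  fixes \<beta> y :: real assumes "\<beta> > 0"
  shows "set_integrable lborel {0<..} (\<lambda>t. t powr \<beta> * exp (- (t^2) / 2 - y * t))"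
proof (rule set_integrable_bound)
  define c where "c = \<beta> - y"
  show "set_integrable lborel {0<..} (\<lambda>t. exp (c^2/2) * exp (- (1/2) * (t - c)^2))"
    unfolding set_integrable_def
    by (intro integrable_mult_indicator integrable_mult_right gauss_integrable) auto
  show "set_borel_measurable lborel {0<..} (\<lambda>t. t powr \<beta> * exp (- (t^2) / 2 - y * t))"
    unfolding set_borel_measurable_def by measurable
  show "AE x in lborel. x \<in> {0<..} \<longrightarrow> norm (x powr \<beta> * exp (- (x^2) / 2 - y * x))
      \<le> norm (exp (c^2/2) * exp (- (1/2) * (x - c)^2))"
  proof (intro AE_I2 impI)
    fix t :: real assume t: "t \<in> {0<..}"
    have "t powr \<beta> = exp (\<beta> * ln t)" using t by (simp add: powr_def)
    also have "\<dots> \<le> exp (\<beta> * t)" using t assms ln_bound[of t] by simp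
    finally have 1: "t powr \<beta> \<le> exp (\<beta> * t)" .
    have "norm (t powr \<beta> * exp (- (t^2) / 2 - y * t)) = t powr \<beta> * exp (- (t^2) / 2 - y * t)"
      by simp
    also have "\<dots> \<le> exp (\<beta> * t) * exp (- (t^2) / 2 - y * t)"
      using 1 by (intro mult_right_mono) auto
    also have "\<dots> = exp (c^2/2) * exp (- (1/2) * (t - c)^2)"
      unfolding exp_add[symmetric] c_def by (simp add: power2_eq_square field_simps)
    finally show "norm (t powr \<beta> * exp (- (t^2) / 2 - y * t))
      \<le> norm (exp (c^2/2) * exp (- (1/2) * (t - c)^2))" by simp
  qed
qed

definition KI :: "real \<Rightarrow> real \<Rightarrow> real" where
  "KI \<beta> y = (LBINT t:{0<..}. t powr \<beta> * exp (- (t^2) / 2 - y * t))"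

lemma emeasure_Ioi_pos: "emeasure lborel {(0::real)<..} > 0"
proof -
  have "emeasure lborel {(0::real)<..<1} \<le> emeasure lborel {(0::real)<..}"
    by (intro emeasure_mono) auto
  moreover have "emeasure lborel {(0::real)<..<1} = 1" by simp
  ultimately show ?thesis by (metis ennreal_zero_less_one order_less_le_trans)
qed

lemma KI_pos: "\<beta> > 0 \<Longrightarrow> KI \<beta> y > 0"
  unfolding KI_def
  by (rule set_integral_pos[OF kernel_integrable]) (auto simp: emeasure_Ioi_pos)

lemma KI_strict_anti: assumes "\<beta> > 0" "y1 < y2" shows "KI \<beta> y2 < KI \<beta> y1"
proof -
  have "KI \<beta> y1 - KI \<beta> y2 = (LBINT t:{0<..}. t powr \<beta> * exp (- (t^2) / 2 - y1 * t)
       - t powr \<beta> * exp (- (t^2) / 2 - y2 * t))"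
    unfolding KI_def by (rule set_integral_diff(2)[symmetric]; rule kernel_integrable[OF assms(1)])
  also have "\<dots> > 0"
  proof (rule set_integral_pos)
    show "set_integrable lborel {0<..} (\<lambda>t. t powr \<beta> * exp (- (t^2) / 2 - y1 * t)
       - t powr \<beta> * exp (- (t^2) / 2 - y2 * t))"
      by (intro set_integral_diff kernel_integrable assms)
    fix t :: real assume "t \<in> {0<..}"
    then have "y1 * t < y2 * t" using assms by simp
    then have "exp (- (t^2) / 2 - y2 * t) < exp (- (t^2) / 2 - y1 * t)" by simp
    then show "0 < t powr \<beta> * exp (- (t^2) / 2 - y1 * t) - t powr \<beta> * exp (- (t^2) / 2 - y2 * t)"
      using \<open>t \<in> _\<close> by (simp add: algebra_simps[symmetric] )
  qed (auto simp: emeasure_Ioi_pos)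
  finally show ?thesis by simp
qed

lemma integral_neg_interval:
  fixes E :: "real \<Rightarrow> real"
  assumes "integrable lborel E" "AE z in lborel. E z \<le> 0" "\<alpha> < \<beta>"
    "\<And>z. \<alpha> < z \<Longrightarrow> z < \<beta> \<Longrightarrow> E z < 0"
  shows "integral\<^sup>L lborel E < 0"
proof -
  have int: "integrable lborel (\<lambda>z. - E z)" using assms(1) by simp
  have nn: "AE z in lborel. 0 \<le> - E z" using assms(2) by eventually_elim simp
  have ge: "integral\<^sup>L lborel E \<le> 0"
    using integral_nonneg_AE[OF nn] by simp
  { assume "integral\<^sup>L lborel E = 0"
    then have "integral\<^sup>L lborel (\<lambda>z. - E z) = 0" by simp
    then have "AE z in lborel. - E z = 0"
      using integral_nonneg_eq_0_iff_AE[OF int nn] by simp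
    then have "AE z in lborel. z \<notin> {\<alpha><..<\<beta>}"
      by eventually_elim (use assms(4) in force)
    then have "{\<alpha><..<\<beta>} \<in> null_sets lborel"
      by (subst AE_iff_null_sets) auto
    then have "emeasure lborel {\<alpha><..<\<beta>} = 0" by auto
    with assms(3) have False by simp }
  with ge show ?thesis by (metis less_eq_real_def)
qed

lemma core:
  fixes p q :: "real \<Rightarrow> real" and K u1 u2 a1 a2 b1 b2 :: real
  assumes ppos: "\<And>z. p z > 0" and qpos: "\<And>z. q z > 0"
    and ratio: "\<And>z c. z < c \<Longrightarrow> p c * q z < p z * q c"
    and pmeas[measurable]: "p \<in> borel_measurable borel" and qmeas[measurable]: "q \<in> borel_measurable borel"
    and pint: "\<And>a b u. set_integrable lborel {a..b} (\<lambda>z. (z - u) * p z)"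
    and qint: "\<And>a b u. set_integrable lborel {a..b} (\<lambda>z. (z - u) * q z)"
    and ptail: "\<And>b. set_integrable lborel {b..} p"
    and qtail: "\<And>a. set_integrable lborel {..a} q"
    and K: "K > 0" and u12: "u1 < u2"
    and a1: "a1 < u1" and a2: "a2 < u2" and b1: "b1 > u1 + K" and b2: "b2 > u2 + K"
    and P1: "(LBINT z:{a1..b1}. (z - u1) * p z) = - K * (LBINT z:{b1..}. p z)"
    and P2: "(LBINT z:{a2..b2}. (z - u2) * p z) = - K * (LBINT z:{b2..}. p z)"
    and Q1: "(LBINT z:{a1..b1}. (z - (u1 + K)) * q z) = K * (LBINT z:{..a1}. q z)"
    and Q2: "(LBINT z:{a2..b2}. (z - (u2 + K)) * q z) = K * (LBINT z:{..a2}. q z)"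
  shows "a1 < a2 \<and> b1 < b2"
proof -
  define v1 where "v1 = u1 + K"
  define v2 where "v2 = u2 + K"
  define g where "g = (\<lambda>a b u z. indicator {a..b} z * ((z - u) * p z) + K * (indicator {b..} z * p z))"
  define h where "h = (\<lambda>a b v z. indicator {a..b} z * ((z - v) * q z) - K * (indicator {..a} z * q z))"
  define gi where "gi = (\<lambda>a b u z. (indicator {a..b} z * (z - u) + indicator {b..} z * K) :: real)"
  define hi where "hi = (\<lambda>a b v z. (indicator {a..b} z * (z - v) - indicator {..a} z * K) :: real)"
  have gint: "has_bochner_integral lborel (g a b u) 0"
    if "(LBINT z:{a..b}. (z - u) * p z) = - K * (LBINT z:{b..}. p z)" for a b u
  proof -
    have "has_bochner_integral lborel (g a b u)
       ((LBINT z:{a..b}. (z - u) * p z) + K * (LBINT z:{b..}. p z))"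
      unfolding g_def set_lebesgue_integral_def
      using pint[of a b u, unfolded set_integrable_def] ptail[of b, unfolded set_integrable_def]
      by (intro has_bochner_integral_add has_bochner_integral_mult_right) (auto intro!: has_bochner_integral_integrable)
    with that show ?thesis by simp
  qed
  have hint: "has_bochner_integral lborel (h a b v) 0"
    if "(LBINT z:{a..b}. (z - v) * q z) = K * (LBINT z:{..a}. q z)" for a b v
  proof -
    have "has_bochner_integral lborel (h a b v)
       ((LBINT z:{a..b}. (z - v) * q z) - K * (LBINT z:{..a}. q z))"
      unfolding h_def set_lebesgue_integral_def
      using qint[of a b v, unfolded set_integrable_def] qtail[of a, unfolded set_integrable_def]
      by (intro has_bochner_integral_diff has_bochner_integral_mult_right) (auto intro!: has_bochner_integral_integrable)
    with that show ?thesis by simp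
  qed
  have G1: "has_bochner_integral lborel (g a1 b1 u1) 0" by (rule gint[OF P1])
  have G2: "has_bochner_integral lborel (g a2 b2 u2) 0" by (rule gint[OF P2])
  have H1: "has_bochner_integral lborel (h a1 b1 v1) 0" by (rule hint) (use Q1 in \<open>simp add: v1_def\<close>)
  have H2: "has_bochner_integral lborel (h a2 b2 v2) 0" by (rule hint) (use Q2 in \<open>simp add: v2_def\<close>)
  have comb: "has_bochner_integral lborel
     (\<lambda>z. lam * (g a2 b2 u2 z - g a1 b1 u1 z) - mu * (h a2 b2 v2 z - h a1 b1 v1 z)) 0" for lam mu
    using has_bochner_integral_diff[OF has_bochner_integral_mult_right[of lam, OF has_bochner_integral_diff[OF G2 G1]]
       has_bochner_integral_mult_right[of mu, OF has_bochner_integral_diff[OF H2 H1]]] by simp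
  have gh: "gi a b u z = hi a b (u + K) z + K" if "z \<noteq> a" "z \<noteq> b" "a < b" for a b u z
    using that unfolding gi_def hi_def by (auto simp: indicator_def)
  define e where "e = (\<lambda>z. hi a2 b2 v2 z - hi a1 b1 v1 z)"
  have Eint: "has_bochner_integral lborel (\<lambda>z. e z * (lam * p z - mu * q z)) 0" for lam mu
  proof -
    have "has_bochner_integral lborel (\<lambda>z. e z * (lam * p z - mu * q z)) 0
       \<longleftrightarrow> has_bochner_integral lborel
     (\<lambda>z. lam * (g a2 b2 u2 z - g a1 b1 u1 z) - mu * (h a2 b2 v2 z - h a1 b1 v1 z)) 0"
    proof (rule has_bochner_integral_cong_AE)
      show "(\<lambda>z. e z * (lam * p z - mu * q z)) \<in> borel_measurable lborel"
        unfolding e_def hi_def by measurable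
      show "(\<lambda>z. lam * (g a2 b2 u2 z - g a1 b1 u1 z) - mu * (h a2 b2 v2 z - h a1 b1 v1 z)) \<in> borel_measurable lborel"
        unfolding g_def h_def by measurable
      have "AE z in lborel. z \<noteq> a1 \<and> z \<noteq> b1 \<and> z \<noteq> a2 \<and> z \<noteq> b2"
        using AE_lborel_singleton[of a1] AE_lborel_singleton[of a2] AE_lborel_singleton[of b1]
          AE_lborel_singleton[of b2] by eventually_elim auto
      then show "AE z in lborel. e z * (lam * p z - mu * q z) =
          lam * (g a2 b2 u2 z - g a1 b1 u1 z) - mu * (h a2 b2 v2 z - h a1 b1 v1 z)"
      proof eventually_elim
        case (elim z)
        have ab1: "a1 < b1" and ab2: "a2 < b2" using a1 b1 a2 b2 K by auto
        have e1: "gi a1 b1 u1 z = hi a1 b1 v1 z + K" using gh[of z a1 b1 u1] elim ab1 by (simp add: v1_def)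
        have e2: "gi a2 b2 u2 z = hi a2 b2 v2 z + K" using gh[of z a2 b2 u2] elim ab2 by (simp add: v2_def)
        have "g a2 b2 u2 z - g a1 b1 u1 z = (gi a2 b2 u2 z - gi a1 b1 u1 z) * p z"
          unfolding g_def gi_def by (simp add: algebra_simps)
        moreover have "h a2 b2 v2 z - h a1 b1 v1 z = (hi a2 b2 v2 z - hi a1 b1 v1 z) * q z"
          unfolding h_def hi_def by (simp add: algebra_simps)
        ultimately have d1: "g a2 b2 u2 z - g a1 b1 u1 z = e z * p z"
          and d2: "h a2 b2 v2 z - h a1 b1 v1 z = e z * q z"
          using e1 e2 unfolding e_def by auto
        show ?case unfolding d1 d2 by (simp add: algebra_simps)
      qed
    qed
    with comb show ?thesis by simp
  qed
  have ab1: "a1 < b1" and ab2: "a2 < b2" and av: "u1 < v1" "u2 < v2" "v1 < v2" "a1 < u1" "a2 < u2"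
    "v1 < b1" "v2 < b2" "v1 = u1 + K" "v2 = u2 + K"
    using a1 b1 a2 b2 K u12 by (auto simp: v1_def v2_def)
  have Spos: "q c * p z - p c * q z > 0" if "z < c" for z c using ratio[OF that] by (simp add: mult.commute)
  have Sneg: "q c * p z - p c * q z < 0" if "c < z" for z c using ratio[OF that] by (simp add: mult.commute)
  have AEpts: "AE z in lborel. z \<noteq> a1 \<and> z \<noteq> b1 \<and> z \<noteq> a2 \<and> z \<noteq> b2"
    using AE_lborel_singleton[of a1] AE_lborel_singleton[of a2] AE_lborel_singleton[of b1]
      AE_lborel_singleton[of b2] by eventually_elim auto
  have contra: False if
    sgn: "\<And>z. z \<noteq> a1 \<Longrightarrow> z \<noteq> b1 \<Longrightarrow> z \<noteq> a2 \<Longrightarrow> z \<noteq> b2 \<Longrightarrow> e z * (lam * p z - mu * q z) \<le> 0"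
    and str: "\<alpha> < \<beta>" "\<And>z. \<alpha> < z \<Longrightarrow> z < \<beta> \<Longrightarrow> e z * (lam * p z - mu * q z) < 0"
    for lam mu \<alpha> \<beta>
  proof -
    have "integral\<^sup>L lborel (\<lambda>z. e z * (lam * p z - mu * q z)) < 0"
      apply (rule integral_neg_interval[OF _ _ str])
      using Eint[of lam mu] apply (simp add: has_bochner_integral_iff)
      using AEpts apply eventually_elim using sgn apply blast
      apply auto
      done
    moreover have "integral\<^sup>L lborel (\<lambda>z. e z * (lam * p z - mu * q z)) = 0"
      using Eint[of lam mu] by (simp add: has_bochner_integral_iff)
    ultimately show False by simp
  qed
  show ?thesis
  proof (rule ccontr)
    assume "\<not> (a1 < a2 \<and> b1 < b2)"
    then consider "a2 \<le> a1" "b2 \<le> b1" | "a2 \<le> a1" "b1 < b2" | "a1 < a2" "b2 \<le> b1" by linarith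
    then show False
    proof cases
      case 1
      have ab: "a1 < b2" using av by linarith
      have en: "e z \<le> 0" if "z \<noteq> a1" "z \<noteq> b1" "z \<noteq> a2" "z \<noteq> b2" for z
        using that 1 av unfolding e_def hi_def by (auto simp: indicator_def)
      have es: "e z < 0" if "a1 < z" "z < b2" for z
        using that 1 av unfolding e_def hi_def by (auto simp: indicator_def)
      show False
      proof (rule contra[of 1 0 a1 b2])
        show "e z * (1 * p z - 0 * q z) \<le> 0" if "z \<noteq> a1" "z \<noteq> b1" "z \<noteq> a2" "z \<noteq> b2" for z
          using en[OF that] ppos[of z] by (simp add: mult_nonpos_nonneg)
        show "e z * (1 * p z - 0 * q z) < 0" if "a1 < z" "z < b2" for z
          using es[OF that] ppos[of z] by (simp add: mult_neg_pos)
      qed (rule ab)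
    next
      case 2
      define c where "c = max b1 v2"
      have en: "e z \<le> 0" if "z \<noteq> a1" "z \<noteq> b1" "z \<noteq> a2" "z \<noteq> b2" "z < c" for z
        using that 2 av unfolding e_def hi_def c_def by (auto simp: indicator_def)
      have ep: "e z \<ge> 0" if "z \<noteq> a1" "z \<noteq> b1" "z \<noteq> a2" "z \<noteq> b2" "z > c" for z
        using that 2 av unfolding e_def hi_def c_def by (auto simp: indicator_def)
      have es: "e z < 0" if "a1 < z" "z < b1" for z
        using that 2 av unfolding e_def hi_def by (auto simp: indicator_def)
      show False
      proof (rule contra[of "q c" "p c" a1 b1])
        show "e z * (q c * p z - p c * q z) \<le> 0" if "z \<noteq> a1" "z \<noteq> b1" "z \<noteq> a2" "z \<noteq> b2" for z
        proof -
          consider "z < c" | "z = c" | "z > c" by linarith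
          then show ?thesis
          proof cases
            case 1 then show ?thesis using en[OF that 1] Spos[OF 1] by (simp add: mult_nonpos_nonneg)
          next
            case 2 then show ?thesis by simp
          next
            case 3 then show ?thesis using ep[OF that 3] Sneg[OF 3] by (simp add: mult_nonneg_nonpos)
          qed
        qed
        show "e z * (q c * p z - p c * q z) < 0" if "a1 < z" "z < b1" for z
          using es[OF that] Spos[of z c] that by (simp add: mult_neg_pos c_def)
      qed (rule ab1)
    next
      case 3
      define c where "c = min a2 u1"
      have ep: "e z \<ge> 0" if "z \<noteq> a1" "z \<noteq> b1" "z \<noteq> a2" "z \<noteq> b2" "z < c" for z
        using that 3 av unfolding e_def hi_def c_def v1_def by (auto simp: indicator_def)
      have en: "e z \<le> 0" if "z \<noteq> a1" "z \<noteq> b1" "z \<noteq> a2" "z \<noteq> b2" "z > c" for z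
        using that 3 av unfolding e_def hi_def c_def v1_def by (auto simp: indicator_def)
      have es: "e z < 0" if "a2 < z" "z < b2" for z
        using that 3 av unfolding e_def hi_def by (auto simp: indicator_def)
      show False
      proof (rule contra[of "- q c" "- p c" a2 b2])
        show "e z * (- q c * p z - - p c * q z) \<le> 0" if "z \<noteq> a1" "z \<noteq> b1" "z \<noteq> a2" "z \<noteq> b2" for z
        proof -
          consider "z < c" | "z = c" | "z > c" by linarith
          then show ?thesis
          proof cases
            case 1 then show ?thesis using ep[OF that 1] Spos[OF 1] by (simp add: mult_nonneg_nonpos)
          next
            case 2 then show ?thesis by simp
          next
            case 3 then show ?thesis using en[OF that 3] Sneg[OF 3] by (simp add: mult_nonpos_nonneg)
          qed
        qed
        show "e z * (- q c * p z - - p c * q z) < 0" if "a2 < z" "z < b2" for z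
        proof -
          have cz: "c < z" using that by (simp add: c_def)
          have "- q c * p z - - p c * q z > 0" using Sneg[OF cz] by simp
          then show ?thesis using es[OF that] by (simp add: mult_neg_pos)
        qed
      qed (rule ab2)
    qed
  qed
qed

lemma phi_repr:
  assumes "r > 0" "\<rho> > 0" "\<sigma> > 0"
  shows "phi_hat r \<rho> m \<sigma> x = KI (r / \<rho>) ((x - m) * sqrt (2 * \<rho>) / \<sigma>) / Gamma ((r + \<rho>) / \<rho>)"
proof -
  define y where "y = (x - m) * sqrt (2 * \<rho>) / \<sigma>"
  have e1: "(r + \<rho>) / \<rho> - 1 = r / \<rho>" using assms by (simp add: field_simps)
  have e0: "- (- (r + \<rho>) / \<rho>) = (r + \<rho>) / \<rho>" by (simp only: minus_divide_left[symmetric] minus_minus)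
  have y2: "y^2 = (x - m)^2 * (2 * \<rho>) / \<sigma>^2"
    using assms by (simp add: y_def power_divide power_mult_distrib)
  have e2: "exp (\<rho> * (x - m)^2 / (2 * \<sigma>^2)) * exp (- (y^2) / 4) = 1"
    unfolding exp_add[symmetric] y2 using assms by (simp add: field_simps)
  have "phi_hat r \<rho> m \<sigma> x = (exp (\<rho> * (x - m)^2 / (2 * \<sigma>^2)) * exp (- (y^2) / 4)) *
     KI (r / \<rho>) y / Gamma ((r + \<rho>) / \<rho>)"
    unfolding phi_hat_def parcyl_def KI_def e0 e1 y_def[symmetric] by simp
  then show ?thesis unfolding y_def[symmetric] by (simp only: e2 mult_1_left)
qed

lemma psi_phi: "psi_hat r \<rho> m \<sigma> x = phi_hat r \<rho> m \<sigma> (2 * m - x)"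
proof -
  have 1: "- ((x - m) * sqrt (2 * \<rho>) / \<sigma>) = (2 * m - x - m) * sqrt (2 * \<rho>) / \<sigma>"
    by (simp add: minus_divide_left algebra_simps)
  have 2: "(x - m)^2 = (2 * m - x - m)^2" by (simp add: power2_eq_square algebra_simps)
  show ?thesis unfolding psi_hat_def phi_hat_def 1 2 ..
qed

lemma phi_pos:
  assumes "r > 0" "\<rho> > 0" "\<sigma> > 0"
  shows "phi_hat r \<rho> m \<sigma> x > 0"
  unfolding phi_repr[OF assms] using assms by (intro divide_pos_pos KI_pos Gamma_real_pos) auto

lemma phi_strict_dec:
  assumes "r > 0" "\<rho> > 0" "\<sigma> > 0" "x1 < x2"
  shows "phi_hat r \<rho> m \<sigma> x2 < phi_hat r \<rho> m \<sigma> x1"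
  unfolding phi_repr[OF assms(1-3)]
proof (rule divide_strict_right_mono)
  have "(x1 - m) * sqrt (2 * \<rho>) / \<sigma> < (x2 - m) * sqrt (2 * \<rho>) / \<sigma>"
    using assms by (intro divide_strict_right_mono mult_strict_right_mono) auto
  then show "KI (r / \<rho>) ((x2 - m) * sqrt (2 * \<rho>) / \<sigma>) < KI (r / \<rho>) ((x1 - m) * sqrt (2 * \<rho>) / \<sigma>)"
    using assms by (intro KI_strict_anti) auto
  show "0 < Gamma ((r + \<rho>) / \<rho>)" using assms by auto
qed

lemma phi_meas:
  assumes "r > 0" "\<rho> > 0" "\<sigma> > 0"
  shows "phi_hat r \<rho> m \<sigma> \<in> borel_measurable borel"
proof -
  have "mono (\<lambda>x. - phi_hat r \<rho> m \<sigma> x)"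
    by (rule monoI) (metis assms phi_strict_dec neg_le_iff_le order_less_imp_le order.eq_iff linorder_neqE_linordered_idom)
  then have "(\<lambda>x. - phi_hat r \<rho> m \<sigma> x) \<in> borel_measurable borel" by (rule borel_measurable_mono)
  then have "(\<lambda>x. - (- phi_hat r \<rho> m \<sigma> x)) \<in> borel_measurable borel" by measurable
  then show ?thesis by simp
qed

theorem proposition4p4:
  fixes r \<rho> m \<sigma> c1 c2 \<theta>1 \<theta>2 a1 b1 a2 b2 :: real
  assumes "r > 0" and "\<rho> > 0" and "\<sigma> > 0" and "c1 + c2 > 0"
    and "\<theta>1 < \<theta>2"
    and "opt_boundaries r \<rho> m \<sigma> c1 c2 \<theta>1 a1 b1"
    and "opt_boundaries r \<rho> m \<sigma> c1 c2 \<theta>2 a2 b2"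
  shows "a1 < a2 \<and> b1 < b2"
proof -
  note pos = assms(1-3)
  define \<phi> where "\<phi> = phi_hat r \<rho> m \<sigma>"
  define \<psi> where "\<psi> = psi_hat r \<rho> m \<sigma>"
  define w where "w = speed_dens \<rho> m \<sigma>"
  define p where "p = (\<lambda>z. w z * \<phi> z)"
  define q where "q = (\<lambda>z. w z * \<psi> z)"
  have \<psi>\<phi>: "\<psi> = (\<lambda>x. \<phi> (2 * m - x))" unfolding \<psi>_def \<phi>_def by (rule ext, rule psi_phi)
  have \<phi>pos: "\<phi> x > 0" for x unfolding \<phi>_def by (rule phi_pos[OF pos])
  have \<psi>pos: "\<psi> x > 0" for x unfolding \<psi>\<phi> by (rule \<phi>pos)
  have \<phi>dec: "\<phi> y < \<phi> x" if "x < y" for x y unfolding \<phi>_def by (rule phi_strict_dec[OF pos that])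
  have \<phi>dec': "\<phi> y \<le> \<phi> x" if "x \<le> y" for x y
    using \<phi>dec[of x y] that by (cases "x = y") auto
  have \<psi>inc: "\<psi> x < \<psi> y" if "x < y" for x y unfolding \<psi>\<phi> using that by (intro \<phi>dec) simp
  have \<psi>inc': "\<psi> x \<le> \<psi> y" if "x \<le> y" for x y
    using \<psi>inc[of x y] that by (cases "x = y") auto
  have \<phi>meas[measurable]: "\<phi> \<in> borel_measurable borel" unfolding \<phi>_def by (rule phi_meas[OF pos])
  have \<psi>meas[measurable]: "\<psi> \<in> borel_measurable borel" unfolding \<psi>\<phi> by measurable
  have wform: "w = (\<lambda>z. 2 / \<sigma>^2 * exp (- (\<rho> / \<sigma>^2) * (z - m)^2))"
    unfolding w_def speed_dens_def by (rule ext) simp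
  have wmeas[measurable]: "w \<in> borel_measurable borel" unfolding wform by measurable
  have wpos: "w z > 0" for z unfolding wform using pos by simp
  have wle: "w z \<le> 2 / \<sigma>^2" for z
  proof -
    have "- (\<rho> / \<sigma>^2) * (z - m)^2 \<le> 0" using pos by (simp add: mult_nonneg_nonneg)
    then have "exp (- (\<rho> / \<sigma>^2) * (z - m)^2) \<le> 1" by simp
    then have "2 / \<sigma>^2 * exp (- (\<rho> / \<sigma>^2) * (z - m)^2) \<le> 2 / \<sigma>^2 * 1"
      by (rule mult_left_mono) simp
    then show ?thesis unfolding wform by simp
  qed
  have wint: "integrable lborel (\<lambda>z. C * w z)" for C
    unfolding wform using pos by (intro integrable_mult_right gauss_integrable) simp
  have ppos: "p z > 0" for z unfolding p_def using wpos \<phi>pos by simp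
  have qpos: "q z > 0" for z unfolding q_def using wpos \<psi>pos by simp
  have ratio: "p c * q z < p z * q c" if "z < c" for z c
  proof -
    have "\<phi> c * \<psi> z < \<phi> z * \<psi> c"
      using \<phi>dec[OF that] \<psi>inc[OF that] \<phi>pos[of c] \<psi>pos[of z]
      by (intro mult_strict_mono) auto
    then have "(w c * w z) * (\<phi> c * \<psi> z) < (w c * w z) * (\<phi> z * \<psi> c)"
      using wpos[of c] wpos[of z] by (intro mult_strict_left_mono) auto
    then show ?thesis unfolding p_def q_def by (simp add: algebra_simps)
  qed
  have pmeas: "p \<in> borel_measurable borel" unfolding p_def by measurable
  have qmeas: "q \<in> borel_measurable borel" unfolding q_def by measurable
  have pint: "set_integrable lborel {a..b} (\<lambda>z. (z - u) * p z)" for a b u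
  proof (rule set_integrable_bound)
    show "set_integrable lborel {a..b} (\<lambda>_. (\<bar>a\<bar> + \<bar>b\<bar> + \<bar>u\<bar>) * (2 / \<sigma>^2) * \<phi> a)"
      by (intro borel_integrable_atLeastAtMost' continuous_on_const)
    show "set_borel_measurable lborel {a..b} (\<lambda>z. (z - u) * p z)"
      unfolding set_borel_measurable_def using pmeas by measurable
    show "AE z in lborel. z \<in> {a..b} \<longrightarrow> norm ((z - u) * p z)
        \<le> norm ((\<bar>a\<bar> + \<bar>b\<bar> + \<bar>u\<bar>) * (2 / \<sigma>^2) * \<phi> a)"
    proof (intro AE_I2 impI)
      fix z assume z: "z \<in> {a..b}"
      have "norm ((z - u) * p z) = \<bar>z - u\<bar> * (w z * \<phi> z)"
        using wpos[of z] \<phi>pos[of z] by (simp add: abs_mult p_def)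
      also have "\<dots> \<le> (\<bar>a\<bar> + \<bar>b\<bar> + \<bar>u\<bar>) * ((2 / \<sigma>^2) * \<phi> a)"
        using z wle[of z] \<phi>dec'[of a z] wpos[of z] \<phi>pos[of z]
        by (intro mult_mono) auto
      also have "\<dots> = norm ((\<bar>a\<bar> + \<bar>b\<bar> + \<bar>u\<bar>) * (2 / \<sigma>^2) * \<phi> a)"
        using \<phi>pos[of a] by (simp add: abs_mult)
      finally show "norm ((z - u) * p z) \<le> norm ((\<bar>a\<bar> + \<bar>b\<bar> + \<bar>u\<bar>) * (2 / \<sigma>^2) * \<phi> a)" .
    qed
  qed
  have qint: "set_integrable lborel {a..b} (\<lambda>z. (z - u) * q z)" for a b u
  proof (rule set_integrable_bound)
    show "set_integrable lborel {a..b} (\<lambda>_. (\<bar>a\<bar> + \<bar>b\<bar> + \<bar>u\<bar>) * (2 / \<sigma>^2) * \<psi> b)"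
      by (intro borel_integrable_atLeastAtMost' continuous_on_const)
    show "set_borel_measurable lborel {a..b} (\<lambda>z. (z - u) * q z)"
      unfolding set_borel_measurable_def using qmeas by measurable
    show "AE z in lborel. z \<in> {a..b} \<longrightarrow> norm ((z - u) * q z)
        \<le> norm ((\<bar>a\<bar> + \<bar>b\<bar> + \<bar>u\<bar>) * (2 / \<sigma>^2) * \<psi> b)"
    proof (intro AE_I2 impI)
      fix z assume z: "z \<in> {a..b}"
      have "norm ((z - u) * q z) = \<bar>z - u\<bar> * (w z * \<psi> z)"
        using wpos[of z] \<psi>pos[of z] by (simp add: abs_mult q_def)
      also have "\<dots> \<le> (\<bar>a\<bar> + \<bar>b\<bar> + \<bar>u\<bar>) * ((2 / \<sigma>^2) * \<psi> b)"
        using z wle[of z] \<psi>inc'[of z b] wpos[of z] \<psi>pos[of z]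
        by (intro mult_mono) auto
      also have "\<dots> = norm ((\<bar>a\<bar> + \<bar>b\<bar> + \<bar>u\<bar>) * (2 / \<sigma>^2) * \<psi> b)"
        using \<psi>pos[of b] by (simp add: abs_mult)
      finally show "norm ((z - u) * q z) \<le> norm ((\<bar>a\<bar> + \<bar>b\<bar> + \<bar>u\<bar>) * (2 / \<sigma>^2) * \<psi> b)" .
    qed
  qed
  have ptail: "set_integrable lborel {b..} p" for b
  proof (rule set_integrable_bound)
    show "set_integrable lborel {b..} (\<lambda>z. \<phi> b * w z)"
      unfolding set_integrable_def by (intro integrable_mult_indicator wint) auto
    show "set_borel_measurable lborel {b..} p"
      unfolding set_borel_measurable_def using pmeas by measurable
    show "AE z in lborel. z \<in> {b..} \<longrightarrow> norm (p z) \<le> norm (\<phi> b * w z)"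
    proof (intro AE_I2 impI)
      fix z assume "z \<in> {b..}"
      then have "\<phi> z * w z \<le> \<phi> b * w z" using \<phi>dec'[of b z] wpos[of z] by (intro mult_right_mono) auto
      then show "norm (p z) \<le> norm (\<phi> b * w z)"
        using \<phi>pos[of z] \<phi>pos[of b] wpos[of z] by (simp add: p_def abs_mult mult.commute)
    qed
  qed
  have qtail: "set_integrable lborel {..a} q" for a
  proof (rule set_integrable_bound)
    show "set_integrable lborel {..a} (\<lambda>z. \<psi> a * w z)"
      unfolding set_integrable_def by (intro integrable_mult_indicator wint) auto
    show "set_borel_measurable lborel {..a} q"
      unfolding set_borel_measurable_def using qmeas by measurable
    show "AE z in lborel. z \<in> {..a} \<longrightarrow> norm (q z) \<le> norm (\<psi> a * w z)"
    proof (intro AE_I2 impI)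
      fix z assume "z \<in> {..a}"
      then have "\<psi> z * w z \<le> \<psi> a * w z" using \<psi>inc'[of z a] wpos[of z] by (intro mult_right_mono) auto
      then show "norm (q z) \<le> norm (\<psi> a * w z)"
        using \<psi>pos[of z] \<psi>pos[of a] wpos[of z] by (simp add: q_def abs_mult mult.commute)
    qed
  qed
  define K where "K = (r + \<rho>) * (c1 + c2)"
  define u1 where "u1 = \<theta>1 - (r + \<rho>) * c1"
  define u2 where "u2 = \<theta>2 - (r + \<rho>) * c1"
  have K: "K > 0" unfolding K_def using assms by simp
  have fP: "(\<lambda>z. (z - \<theta> + (r + \<rho>) * c1) * speed_dens \<rho> m \<sigma> z * phi_hat r \<rho> m \<sigma> z)
     = (\<lambda>z. (z - (\<theta> - (r + \<rho>) * c1)) * p z)" for \<theta>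
    unfolding p_def w_def \<phi>_def by (rule ext) (simp add: algebra_simps)
  have fQ: "(\<lambda>z. (z - \<theta> - (r + \<rho>) * c2) * speed_dens \<rho> m \<sigma> z * psi_hat r \<rho> m \<sigma> z)
     = (\<lambda>z. (z - ((\<theta> - (r + \<rho>) * c1) + K)) * q z)" for \<theta>
    unfolding q_def w_def \<psi>_def K_def by (rule ext) (simp add: algebra_simps)
  have fp: "(\<lambda>z. speed_dens \<rho> m \<sigma> z * phi_hat r \<rho> m \<sigma> z) = p" unfolding p_def w_def \<phi>_def ..
  have fq: "(\<lambda>z. speed_dens \<rho> m \<sigma> z * psi_hat r \<rho> m \<sigma> z) = q" unfolding q_def w_def \<psi>_def ..
  have O1: "a1 < u1" "b1 > u1 + K"
    "(LBINT z:{a1..b1}. (z - u1) * p z) = - K * (LBINT z:{b1..}. p z)"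
    "(LBINT z:{a1..b1}. (z - (u1 + K)) * q z) = K * (LBINT z:{..a1}. q z)"
    using assms(6) unfolding opt_boundaries_def fP fQ fp fq
    by (auto simp: u1_def K_def algebra_simps)
  have O2: "a2 < u2" "b2 > u2 + K"
    "(LBINT z:{a2..b2}. (z - u2) * p z) = - K * (LBINT z:{b2..}. p z)"
    "(LBINT z:{a2..b2}. (z - (u2 + K)) * q z) = K * (LBINT z:{..a2}. q z)"
    using assms(7) unfolding opt_boundaries_def fP fQ fp fq
    by (auto simp: u2_def K_def algebra_simps)
  have u12: "u1 < u2" unfolding u1_def u2_def using assms(5) by simp
  show ?thesis
    by (rule core[OF ppos qpos ratio pmeas qmeas pint qint ptail qtail K u12 O1(1) O2(1) O1(2) O2(2)
          O1(3) O2(3) O1(4) O2(4)])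
qed

end
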